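(* There exist infinitely many circles $(x-h)^2+y^2=a^2$ with $h,a\in\mathbb{Q}$, $a>0$, for which the ratios $h/a$ are pairwise distinct, such that each of them carries four rational points $(x_i,y_i)$, $i=1,\dots,4$, with $x_{i+1}=\tfrac{5}{3}x_i$ for $i=1,2,3$, whose fourth point is $(x_4,y_4)=(h+a,0)$ and whose first point $(x_1,y_1)$ does not lie on the $x$-axis.
   Context: Rational points are points with both coordinates in $\mathbb{Q}$. *)

theory Defs
  imports Complex_Main
begin

definition on_circle :: "rat \<Rightarrow> rat \<Rightarrow> rat \<times> rat \<Rightarrow> bool" where
  "on_circle h a p \<longleftrightarrow> (fst p - h)^2 + (snd p)^2 = a^2"

end

theory Submission
  imports Defs
begin


lemma tangent_fact:
  fixes x y a b c l t :: rat
  assumes cv: "y^2 = x^3 + a*x^2 + b*x + c" and y0: "y \<noteq> 0"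
    and ld: "l = (3*x^2 + 2*a*x + b)/(2*y)"
  shows "t^3 + a*t^2 + b*t + c - (y + l*(t-x))^2 = (t-x)^2*(t-(l^2 - a - 2*x))"
proof -
  have h2: "2*y*l = 3*x^2 + 2*a*x + b" using y0 ld by (simp add: field_simps)
  have "(y + l*(t-x))^2 = y^2 + (2*y*l)*(t-x) + l^2*(t-x)^2" by algebra
  also have "... = (x^3 + a*x^2 + b*x + c) + (3*x^2 + 2*a*x + b)*(t-x) + l^2*(t-x)^2"
    using cv h2 by simp
  finally show ?thesis by algebra
qed

lemma chord_fact:
  fixes x1 y1 x2 y2 a b c l t :: rat
  assumes c1: "y1^2 = x1^3 + a*x1^2 + b*x1 + c" and c2: "y2^2 = x2^3 + a*x2^2 + b*x2 + c"
    and ne: "x1 \<noteq> x2" and ld: "l = (y2 - y1)/(x2 - x1)"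
  shows "t^3 + a*t^2 + b*t + c - (y1 + l*(t-x1))^2 = (t-x1)*(t-x2)*(t-(l^2 - a - x1 - x2))"
proof -
  define h where "h s = s^2 + s*x1 + x1^2 + a*(s+x1) + b - 2*y1*l - l^2*(s-x1)" for s
  have g: "s^3 + a*s^2 + b*s + c - (y1 + l*(s-x1))^2 = (s-x1) * h s" for s
  proof -
    have "s^3 + a*s^2 + b*s + c - (y1 + l*(s-x1))^2 = (s^3 + a*s^2 + b*s + c) - (x1^3 + a*x1^2 + b*x1 + c) - 2*y1*l*(s-x1) - l^2*(s-x1)^2"
      using c1 by algebra
    then show ?thesis unfolding h_def by algebra
  qed
  have y2e: "y2 = y1 + l*(x2-x1)" using ne ld by (simp add: field_simps)
  have "(x2-x1) * h x2 = 0" using g[of x2] c2 y2e by simp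
  then have hx2: "h x2 = 0" using ne by simp
  have "h t = h t - h x2" using hx2 by simp
  also have "... = (t-x2)*(t-(l^2 - a - x1 - x2))" unfolding h_def by algebra
  finally show ?thesis using g[of t] by simp
qed



definition ff :: "rat \<Rightarrow> rat" where "ff t = t^3 + 2940*t^2 + 2646000*t + 729000000"
definition NN :: "int \<Rightarrow> int \<Rightarrow> int" where
  "NN A D = A^4 - 2*2646000*A^2*D^4 - 8*729000000*A*D^6 - 1571724000000*D^8"
definition MM :: "int \<Rightarrow> int \<Rightarrow> int" where
  "MM A D = 3*A^2 + 2*2940*A*D^2 + 2646000*D^4"

lemma step_x:
  fixes A B D :: int and x y l :: rat
  assumes D0: "D \<noteq> 0" and B0: "B \<noteq> 0" and xd: "x = of_int A / of_int D^2" and yd: "y = of_int B / of_int D^3"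
    and cv: "y^2 = ff x" and ld: "l = (3*x^2 + 2*2940*x + 2646000)/(2*y)"
  shows "l^2 - 2940 - 2*x = of_int (NN A D) / of_int (2*B*D)^2"
proof -
  have y0: "y \<noteq> 0" using yd B0 D0 by simp
  have "l^2 - 2940 - 2*x = ((3*x^2 + 2*2940*x + 2646000)^2 - 4*(2940 + 2*x)*y^2)/(4*y^2)"
  proof -
    have "l^2 = (3*x^2 + 2*2940*x + 2646000)^2/(4*y^2)" using ld by (simp add: power_divide power_mult_distrib)
    then show ?thesis using y0 by (simp add: field_simps)
  qed
  also have "... = (x^4 - 2*2646000*x^2 - 8*729000000*x - 1571724000000)/(4*y^2)"
    using cv unfolding ff_def by (simp add: algebra_simps power2_eq_square power3_eq_cube power4_eq_xxxx)
  also have "... = of_int (NN A D) / of_int (2*B*D)^2"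
    unfolding xd yd NN_def using D0 B0 by (simp add: field_simps)
  finally show ?thesis .
qed

lemma step_y_rat:
  fixes A B D N y x l :: rat
  assumes D0: "D \<noteq> 0" and B0: "B \<noteq> 0" and xd: "x = A / D^2" and yd: "y = B / D^3"
    and ld: "l = (3*x^2 + 2*2940*x + 2646000)/(2*y)"
  shows "-(y + l*(N / (2*B*D)^2 - x)) = (-(8*B^4 + (3*A^2 + 2*2940*A*D^2 + 2646000*D^4)*(N - 4*A*B^2))) / (2*B*D)^3"
  unfolding ld xd yd using D0 B0 by (simp add: field_simps) algebra

lemma step_y:
  fixes A B D :: int and x y l :: rat
  assumes D0: "D \<noteq> 0" and B0: "B \<noteq> 0" and xd: "x = of_int A / of_int D^2" and yd: "y = of_int B / of_int D^3"
    and ld: "l = (3*x^2 + 2*2940*x + 2646000)/(2*y)"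
  shows "-(y + l*(of_int (NN A D) / of_int (2*B*D)^2 - x)) = of_int (-(8*B^4 + MM A D*(NN A D - 4*A*B^2))) / of_int (2*B*D)^3"
  using step_y_rat[of "of_int D" "of_int B" x "of_int A" y l "of_int (NN A D)"] assms
  unfolding MM_def by simp



definition dbl :: "int \<times> int \<times> int \<Rightarrow> int \<times> int \<times> int" where
  "dbl T = (case T of (A,B,D) \<Rightarrow> (NN A D, -(8*B^4 + MM A D*(NN A D - 4*A*B^2)), 2*B*D))"

primrec trip :: "nat \<Rightarrow> int \<times> int \<times> int" where
  "trip 0 = (1309, -107113, 1)" | "trip (Suc n) = dbl (trip n)"

lemma odd_NN: "odd A \<Longrightarrow> odd (NN A D)"
  by (simp add: NN_def)
lemma odd_MM: "odd A \<Longrightarrow> odd (MM A D)"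
  by (simp add: MM_def)

definition xr :: "int \<times> int \<times> int \<Rightarrow> rat" where "xr T = (case T of (A,B,D) \<Rightarrow> of_int A / of_int D^2)"
definition yr :: "int \<times> int \<times> int \<Rightarrow> rat" where "yr T = (case T of (A,B,D) \<Rightarrow> of_int B / of_int D^3)"
definition lam :: "int \<times> int \<times> int \<Rightarrow> rat" where
  "lam T = (3*(xr T)^2 + 2*2940*(xr T) + 2646000)/(2*yr T)"

lemma inv_trip:
  "case trip n of (A,B,D) \<Rightarrow> odd A \<and> odd B \<and> (\<exists>k. D = 2^n * k \<and> odd k) \<and> (yr (trip n))^2 = ff (xr (trip n))"
proof (induction n)
  case 0
  show ?case by (simp add: xr_def yr_def ff_def)
next
  case (Suc n)
  obtain A B D where t: "trip n = (A,B,D)" by (metis prod_cases3)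
  from Suc t obtain k where oA: "odd A" and oB: "odd B" and Dk: "D = 2^n*k" "odd k"
    and cv: "(yr (trip n))^2 = ff (xr (trip n))" by auto
  have D0: "D \<noteq> 0" using Dk by auto
  have B0: "B \<noteq> 0" using oB by auto
  have tS: "trip (Suc n) = (NN A D, -(8*B^4 + MM A D*(NN A D - 4*A*B^2)), 2*B*D)"
    using t by (simp add: dbl_def)
  have xx: "xr (trip (Suc n)) = lam (trip n)^2 - 2940 - 2*xr (trip n)"
    using step_x[OF D0 B0, where A=A and x="xr (trip n)" and y="yr (trip n)" and l="lam (trip n)"] cv
    unfolding tS by (simp add: t xr_def yr_def lam_def)
  have yy: "yr (trip (Suc n)) = -(yr (trip n) + lam (trip n)*(xr (trip (Suc n)) - xr (trip n)))"
    using step_y[OF D0 B0, where A=A and x="xr (trip n)" and y="yr (trip n)" and l="lam (trip n)"] 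
    unfolding tS by (simp add: t xr_def yr_def lam_def)
  have y0: "yr (trip n) \<noteq> 0" using D0 B0 by (simp add: t yr_def)
  have tf: "t^3 + 2940*t^2 + 2646000*t + 729000000 - (yr (trip n) + lam (trip n)*(t - xr (trip n)))^2
     = (t - xr (trip n))^2 * (t - (lam (trip n)^2 - 2940 - 2*xr (trip n)))" for t
    using tangent_fact[where y="yr (trip n)" and x="xr (trip n)" and a=2940 and b=2646000 and c=729000000 and l="lam (trip n)" and t=t] cv y0
    by (simp add: ff_def lam_def)
  have "(yr (trip (Suc n)))^2 = ff (xr (trip (Suc n)))"
    using tf[of "xr (trip (Suc n))"] unfolding yy xx ff_def by (simp add: power2_eq_square algebra_simps)
  moreover have "odd (NN A D)" using oA odd_NN by blast
  moreover have "odd (-(8*B^4 + MM A D*(NN A D - 4*A*B^2)))" using oA odd_NN odd_MM by simp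
  moreover have "2*B*D = 2^(Suc n) * (B*k) \<and> odd (B*k)" using Dk oB by simp
  ultimately show ?case unfolding tS by blast
qed



lemma trip_props:
  obtains A B D k where "trip n = (A,B,D)" "odd A" "odd B" "D = 2^n*k" "odd k"
    "(of_int B / of_int D^3)^2 = ff (of_int A / of_int D^2)"
  using inv_trip[of n] by (cases "trip n") (auto simp: xr_def yr_def)

lemma curve_trip: "(yr (trip n))^2 = ff (xr (trip n))"
  using inv_trip[of n] by (cases "trip n") auto

lemma y_nz: "yr (trip n) \<noteq> 0"
proof -
  obtain A B D k where "trip n = (A,B,D)" "odd A" "odd B" "D = 2^n*k" "odd k"
    by (rule trip_props)
  then show ?thesis by (auto simp: yr_def)
qed

lemma x_step: "xr (trip (Suc n)) = lam (trip n)^2 - 2940 - 2*xr (trip n)"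
proof -
  obtain A B D k where t: "trip n = (A,B,D)" and oB: "odd B" and Dk: "D = 2^n*k" "odd k"
    by (rule trip_props)
  have D0: "D \<noteq> 0" using Dk by auto
  have B0: "B \<noteq> 0" using oB by auto
  have tS: "trip (Suc n) = (NN A D, -(8*B^4 + MM A D*(NN A D - 4*A*B^2)), 2*B*D)"
    using t by (simp add: dbl_def)
  show ?thesis
    using step_x[OF D0 B0, where A=A and x="xr (trip n)" and y="yr (trip n)" and l="lam (trip n)"] curve_trip[of n]
    unfolding tS by (simp add: t xr_def yr_def lam_def)
qed

lemma sq_aux:
  fixes P Q e X :: rat
  assumes "-(P^2) = Q^2 * (-e - X)" "Q \<noteq> 0"
  shows "X + e = (P/Q)^2"
proof -
  have "(P/Q)^2 = P^2/Q^2" by (simp add: power_divide)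
  also have "... = (Q^2 * (X + e))/Q^2" using assms(1) by (simp add: algebra_simps)
  also have "... = X + e" using assms(2) by simp
  finally show ?thesis by simp
qed

lemma sq_trip:
  assumes e: "e \<in> {540, 900, 1500::rat}"
  shows "\<exists>r. r \<noteq> 0 \<and> xr (trip (Suc n)) + e = r^2"
proof -
  let ?x = "xr (trip n)" and ?y = "yr (trip n)" and ?l = "lam (trip n)" and ?x' = "xr (trip (Suc n))"
  have tf: "t^3 + 2940*t^2 + 2646000*t + 729000000 - (?y + ?l*(t - ?x))^2
     = (t - ?x)^2 * (t - ?x')" for t
    using tangent_fact[where y="?y" and x="?x" and a=2940 and b=2646000 and c=729000000 and l="?l" and t=t]
      curve_trip[of n] y_nz[of n] x_step[of n]
    by (simp add: ff_def lam_def)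
  have fe: "(-e)^3 + 2940*(-e)^2 + 2646000*(-e) + 729000000 = 0" using e by auto
  have ne: "?x \<noteq> -e"
  proof
    assume "?x = -e"
    then have "?y^2 = 0" using curve_trip[of n] fe by (simp add: ff_def)
    then show False using y_nz[of n] by simp
  qed
  have ne': "?x' \<noteq> -e"
  proof
    assume "?x' = -e"
    then have "(yr (trip (Suc n)))^2 = 0" using curve_trip[of "Suc n"] fe by (simp add: ff_def)
    then show False using y_nz[of "Suc n"] by simp
  qed
  have eq: "-((?y + ?l*(-e - ?x))^2) = (-e - ?x)^2 * (-e - ?x')" using tf[of "-e"] fe by simp
  define r where "r = (?y + ?l*(-e - ?x))/(-e - ?x)"
  have "?x' + e = r^2"
  proof -
    have "-e - ?x \<noteq> 0" using ne by auto
    then show ?thesis using sq_aux[OF eq] unfolding r_def by simp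
  qed
  moreover have "r \<noteq> 0" using \<open>?x' + e = r^2\<close> ne' by auto
  ultimately show ?thesis by blast
qed



lemma xT_formula:
  fixes A B D :: rat
  assumes D0: "D \<noteq> 0" and M0: "A + 500*D^2 \<noteq> 0" and cv: "(B/D^3)^2 = ff (A/D^2)"
  shows "((B/D^3 - 4000)/(A/D^2 + 500))^2 - 2940 + 500 - A/D^2 + 500
         = 64*D*(-125*B + 7125*A*D + 4062500*D^3)/(A + 500*D^2)^2"
proof -
  have cv': "B^2 = A^3 + 2940*A^2*D^2 + 2646000*A*D^4 + 729000000*D^6"
  proof -
    have h1: "(B/D^3)^2 * D^6 = B^2" using D0 by (simp add: power_divide flip: power_mult)
    have h2: "ff (A/D^2) * D^6 = A^3 + 2940*A^2*D^2 + 2646000*A*D^4 + 729000000*D^6"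
      using D0 unfolding ff_def by (simp add: field_simps)
    show ?thesis using h1 h2 cv by simp
  qed
  have e1: "(B/D^3 - 4000)/(A/D^2 + 500) = (B - 4000*D^3)/(D*(A + 500*D^2))"
  proof -
    have a: "B/D^3 - 4000 = (B - 4000*D^3)/D^3" using D0 by (simp add: field_simps)
    have b: "A/D^2 + 500 = (A + 500*D^2)/D^2" using D0 by (simp add: field_simps)
    have "((B - 4000*D^3)/D^3)/((A + 500*D^2)/D^2) = ((B - 4000*D^3)*D^2)/(D^3*(A + 500*D^2))"
      by simp
    also have "... = (B - 4000*D^3)/(D*(A + 500*D^2))"
      using D0 by (simp add: power2_eq_square power3_eq_cube)
    finally show ?thesis using a b by simp
  qed
  define M where "M = A + 500*D^2"
  have M0': "M \<noteq> 0" using M0 M_def by simp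
  have l2: "((B - 4000*D^3)/(D*M))^2 = (B - 4000*D^3)^2/(D^2*M^2)"
    by (simp add: power_divide power_mult_distrib)
  have "(B - 4000*D^3)^2/(D^2*M^2) - 2940 + 500 - A/D^2 + 500 = 64*D*(-125*B + 7125*A*D + 4062500*D^3)/M^2"
    using D0 M0' apply (simp add: field_simps) using cv' M_def by algebra
  then show ?thesis unfolding e1 M_def[symmetric] l2 by simp
qed



definition xTn :: "nat \<Rightarrow> rat" where
  "xTn n = ((yr (trip (Suc n)) - 4000)/(xr (trip (Suc n)) + 500))^2 - 2940 + 500 - xr (trip (Suc n))"
definition Lv :: "nat \<Rightarrow> rat" where "Lv n = - xTn n / 20"

lemma xR_ne: "xr (trip (Suc n)) + 500 \<noteq> 0"
proof
  assume h: "xr (trip (Suc n)) + 500 = 0"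
  obtain A B D k where t: "trip (Suc n) = (A,B,D)" and oA: "odd A" and Dk: "D = 2^(Suc n)*k" "odd k"
    by (rule trip_props)
  have D0: "D \<noteq> 0" using Dk by (auto)
  have "of_int A = (-500 * of_int D^2 :: rat)" using h D0 unfolding t xr_def by (simp add: field_simps)
  then have "(of_int A::rat) = of_int (-500*D^2)" by simp
  then have "A = -500*D^2" by (simp only: of_int_eq_iff)
  then show False using oA by simp
qed

lemma parity_pow2:
  fixes X Y :: int
  assumes "2^i * X = 2^j * Y" "odd X" "odd Y"
  shows "i = j"
proof (rule ccontr)
  assume "i \<noteq> j"
  then consider "i < j" | "j < i" by linarith
  then show False
  proof cases
    case 1
    then have "(2::int)^j = 2^i * 2^(j-i)" by (simp add: power_add[symmetric])
    then have "X = 2^(j-i) * Y" using assms(1) by simp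
    then show False using assms(2) 1 by simp
  next
    case 2
    then have "(2::int)^i = 2^j * 2^(i-j)" by (simp add: power_add[symmetric])
    then have "Y = 2^(i-j) * X" using assms(1) by simp
    then show False using assms(3) 2 by simp
  qed
qed

lemma Lv_form:
  assumes t: "trip (Suc n) = (A,B,D)"
  shows "Lv n = 25 - 16 * (of_int D * (-125*of_int B + 7125*of_int A*of_int D + 4062500*of_int D^3)) / (5 * (of_int A + 500*of_int D^2)^2)"
proof -
  obtain A' B' D' k where t': "trip (Suc n) = (A',B',D')" and Dk: "D' = 2^(Suc n)*k" "odd k"
    and cv: "(of_int B' / of_int D'^3)^2 = ff (of_int A' / of_int D'^2)"
    by (rule trip_props[of "Suc n"])
  have eqs: "A' = A" "B' = B" "D' = D" using t t' by auto
  have D0: "D \<noteq> 0" using Dk eqs by auto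
  have xe: "xr (trip (Suc n)) = of_int A / of_int D^2" unfolding t xr_def by simp
  have ye: "yr (trip (Suc n)) = of_int B / of_int D^3" unfolding t yr_def by simp
  have M0: "of_int A + 500 * (of_int D)^2 \<noteq> (0::rat)"
  proof
    assume h: "of_int A + 500 * (of_int D)^2 = (0::rat)"
    have "xr (trip (Suc n)) + 500 = (of_int A + 500 * (of_int D)^2) / of_int D^2"
      unfolding xe using D0 by (simp add: field_simps)
    then show False using h xR_ne[of n] by simp
  qed
  have "xTn n + 500 = ((of_int B / of_int D^3 - 4000)/(of_int A / of_int D^2 + 500))^2 - 2940 + 500 - of_int A / of_int D^2 + 500"
    unfolding xTn_def xe ye by simp
  also have "... = 64*of_int D*(-125*of_int B + 7125*of_int A*of_int D + 4062500*of_int D^3)/(of_int A + 500*of_int D^2)^2"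
    by (rule xT_formula) (use D0 M0 cv eqs in auto)
  finally have h: "xTn n + 500 = 64*of_int D*(-125*of_int B + 7125*of_int A*of_int D + 4062500*of_int D^3)/(of_int A + 500*of_int D^2)^2" .
  have "Lv n = 25 - (xTn n + 500)/20" unfolding Lv_def by (simp add: field_simps)
  also have "... = 25 - 16 * (of_int D * (-125*of_int B + 7125*of_int A*of_int D + 4062500*of_int D^3)) / (5 * (of_int A + 500*of_int D^2)^2)"
    unfolding h by simp
  finally show ?thesis .
qed



lemma sq2:
  fixes k r X l :: rat
  assumes "k*r^2*X = l^2" "k \<noteq> 0" "r \<noteq> 0"
  shows "X = k*(l/(k*r))^2"
proof -
  have "k*(l/(k*r))^2 = k*(l^2/(k^2*r^2))" by (simp add: power_divide power_mult_distrib)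
  also have "... = k*((k*r^2*X)/(k^2*r^2))" using assms(1) by simp
  also have "... = X" using assms(2,3) by (simp add: field_simps power2_eq_square)
  finally show ?thesis by simp
qed

lemma chord_at:
  assumes e: "e \<in> {540, 900, 1500::rat}"
  shows "\<exists>q. xTn n + e = (e - 500)*q^2"
proof -
  let ?x2 = "xr (trip (Suc n))" and ?y2 = "yr (trip (Suc n))"
  define l where "l = (?y2 - 4000)/(?x2 - (-500))"
  have c1: "(4000::rat)^2 = (-500)^3 + 2940*(-500)^2 + 2646000*(-500) + 729000000" by simp
  have c2: "?y2^2 = ?x2^3 + 2940*?x2^2 + 2646000*?x2 + 729000000"
    using curve_trip[of "Suc n"] by (simp add: ff_def)
  have ne: "-500 \<noteq> ?x2" using xR_ne[of n] by auto
  have xt: "xTn n = l^2 - 2940 - (-500) - ?x2" unfolding xTn_def l_def by simp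
  have cf: "t^3 + 2940*t^2 + 2646000*t + 729000000 - (4000 + l*(t-(-500)))^2 = (t-(-500))*(t-?x2)*(t-(l^2 - 2940 - (-500) - ?x2))" for t
    by (rule chord_fact[OF c1 c2 ne l_def])
  have fe: "(-e)^3 + 2940*(-e)^2 + 2646000*(-e) + 729000000 = 0" using e by auto
  obtain r where r0: "r \<noteq> 0" and r: "?x2 + e = r^2" using sq_trip[OF e, of n] by blast
  have "-((4000 + l*(-e+500))^2) = (-e+500)*(-e-?x2)*(-e - xTn n)"
    using cf[of "-e"] fe unfolding xt by simp
  also have "(-e-?x2) = -(r^2)" using r by simp
  finally have "(e - 500)*r^2*(xTn n + e) = (4000 + l*(-e+500))^2" by (simp add: algebra_simps)
  moreover have "e - 500 \<noteq> 0" using e by auto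
  ultimately show ?thesis using sq2 r0 by blast
qed

lemma Lv_sq: "\<exists>u v w. 27 - Lv n = 2*u^2 \<and> 45 - Lv n = 5*w^2 \<and> 75 - Lv n = 2*v^2"
proof -
  obtain q1 where q1: "xTn n + 540 = 40*q1^2" using chord_at[of 540 n] by auto
  obtain q2 where q2: "xTn n + 900 = 400*q2^2" using chord_at[of 900 n] by auto
  obtain q3 where q3: "xTn n + 1500 = 1000*q3^2" using chord_at[of 1500 n] by auto
  have "27 - Lv n = 2*q1^2" using q1 unfolding Lv_def by (simp add: field_simps)
  moreover have "45 - Lv n = 5*(2*q2)^2" using q2 unfolding Lv_def by (simp add: field_simps)
  moreover have "75 - Lv n = 2*(5*q3)^2" using q3 unfolding Lv_def by (simp add: field_simps)
  ultimately show ?thesis by blast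
qed

definition QQ :: "int \<times> int \<times> int \<Rightarrow> int" where
  "QQ T = (case T of (A,B,D) \<Rightarrow> D * (-125*B + 7125*A*D + 4062500*D^3))"
definition MQ :: "int \<times> int \<times> int \<Rightarrow> int" where
  "MQ T = (case T of (A,B,D) \<Rightarrow> A + 500*D^2)"

lemma Lv_QQ: "Lv n = 25 - 16 * of_int (QQ (trip (Suc n))) / (5 * of_int (MQ (trip (Suc n)))^2)"
proof -
  obtain A B D where t: "trip (Suc n) = (A,B,D)" by (metis prod_cases3)
  show ?thesis unfolding Lv_form[OF t] unfolding t QQ_def MQ_def by simp
qed

lemma QQ_par: "\<exists>k. QQ (trip (Suc n)) = 2^(Suc n) * k \<and> odd k \<and> odd (MQ (trip (Suc n)))"
proof -
  obtain A B D k where t: "trip (Suc n) = (A,B,D)" and oA: "odd A" and oB: "odd B" and Dk: "D = 2^(Suc n)*k" "odd k"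
    by (rule trip_props)
  have DD: "D = 2*(2^n*k)" using Dk by simp
  have "QQ (trip (Suc n)) = 2^(Suc n) * (k * (-125*B + 7125*A*D + 4062500*D^3))"
    unfolding t QQ_def using Dk by simp
  moreover have "odd (k * (-125*B + 7125*A*D + 4062500*D^3))" using Dk(2) oB unfolding DD by simp
  moreover have "odd (MQ (trip (Suc n)))" unfolding t MQ_def DD using oA by simp
  ultimately show ?thesis by blast
qed

lemma Lv_inj: "inj Lv"
proof (rule injI)
  fix n m assume h: "Lv n = Lv m"
  obtain k where k: "QQ (trip (Suc n)) = 2^(Suc n) * k" "odd k" "odd (MQ (trip (Suc n)))" using QQ_par by blast
  obtain k' where k': "QQ (trip (Suc m)) = 2^(Suc m) * k'" "odd k'" "odd (MQ (trip (Suc m)))" using QQ_par by blast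
  define a where "a = QQ (trip (Suc n))"
  define b where "b = MQ (trip (Suc n))"
  define a' where "a' = QQ (trip (Suc m))"
  define b' where "b' = MQ (trip (Suc m))"
  have b0: "b \<noteq> 0" "b' \<noteq> 0" using k(3) k'(3) unfolding b_def b'_def by auto
  have "16 * of_int a / (5 * of_int b^2) = (16 * of_int a' / (5 * of_int b'^2) :: rat)"
    using h unfolding Lv_QQ a_def b_def a'_def b'_def by simp
  then have "(of_int (a * b'^2) :: rat) = of_int (a' * b^2)" using b0 by (simp add: field_simps)
  then have "a * b'^2 = a' * b^2" by (simp only: of_int_eq_iff)
  then have "2^(Suc n) * (k * b'^2) = 2^(Suc m) * (k' * b^2)" unfolding a_def a'_def k(1) k'(1) by (simp add: ac_simps)
  moreover have "odd (k * b'^2)" "odd (k' * b^2)" using k k' unfolding b_def b'_def by auto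
  ultimately have "Suc n = Suc m" by (rule parity_pow2)
  then show "n = m" by simp
qed

lemma Lv_ne: "Lv n \<noteq> 27"
proof
  assume h: "Lv n = 27"
  obtain k where k: "QQ (trip (Suc n)) = 2^(Suc n) * k" "odd k" "odd (MQ (trip (Suc n)))" using QQ_par by blast
  define a where "a = QQ (trip (Suc n))"
  define b where "b = MQ (trip (Suc n))"
  have b0: "b \<noteq> 0" using k(3) unfolding b_def by auto
  have "25 - 16 * of_int a / (5 * of_int b^2) = (27::rat)" using h unfolding Lv_QQ a_def b_def by simp
  then have "(of_int (5 * b^2) :: rat) = of_int (-8 * a)" using b0 by (simp add: field_simps)
  then have "5 * b^2 = -8 * a" by (simp only: of_int_eq_iff)
  then show False using k(3) unfolding b_def by (metis even_minus even_mult_iff even_numeral odd_numeral odd_one power2_eq_square)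
qed



lemma circ1:
  fixes L u :: rat
  assumes "27 - L = 2*u^2"
  shows "on_circle ((125 + L)/2) ((125 - L)/2) (27, 14*u)"
  using assms unfolding on_circle_def by (simp add: field_simps power2_eq_square)

lemma circ2:
  fixes L w :: rat
  assumes "45 - L = 5*w^2"
  shows "on_circle ((125 + L)/2) ((125 - L)/2) (45, 20*w)"
  using assms unfolding on_circle_def by (simp add: field_simps power2_eq_square)

lemma circ3:
  fixes L v :: rat
  assumes "75 - L = 2*v^2"
  shows "on_circle ((125 + L)/2) ((125 - L)/2) (75, 10*v)"
  using assms unfolding on_circle_def by (simp add: field_simps power2_eq_square)

lemma circ4:
  fixes L :: rat
  shows "on_circle ((125 + L)/2) ((125 - L)/2) (125, 0)"
  unfolding on_circle_def by (simp add: field_simps power2_eq_square)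

theorem mainTheorem3:
  shows "\<exists>S :: (rat \<times> rat) set.
    infinite S \<and>
    inj_on (\<lambda>(h, a). h / a) S \<and>
    (\<forall>(h, a) \<in> S. a > 0 \<and>
      (\<exists>x y :: nat \<Rightarrow> rat.
         (\<forall>i\<in>{1..4}. on_circle h a (x i, y i)) \<and>
         (\<forall>i\<in>{1..3}. x (i + 1) = 5 / 3 * x i) \<and>
         x 4 = h + a \<and> y 4 = 0 \<and>
         y 1 \<noteq> 0))"
proof -
  define g where "g n = ((125 + Lv n)/2, (125 - Lv n)/2)" for n
  have Lle: "Lv n \<le> 27" for n
  proof -
    obtain u v w where "27 - Lv n = 2*u^2" using Lv_sq[of n] by blast
    moreover have "0 \<le> u^2" by simp
    ultimately show ?thesis by linarith
  qed
  have "inj g"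
  proof (rule injI)
    fix n m assume "g n = g m"
    then have "Lv n = Lv m" unfolding g_def by simp
    then show "n = m" using Lv_inj by (simp add: inj_eq)
  qed
  then have inf: "infinite (range g)" using finite_imageD[of g UNIV] by auto
  have inj: "inj_on (\<lambda>(h, a). h / a) (range g)"
  proof (rule inj_onI)
    fix p q assume "p \<in> range g" "q \<in> range g" and e: "(\<lambda>(h, a). h / a) p = (\<lambda>(h, a). h / a) q"
    then obtain n m where p: "p = g n" and q: "q = g m" by blast
    have n0: "125 - Lv n \<noteq> 0" "125 - Lv m \<noteq> 0" using Lle[of n] Lle[of m] by auto
    have n1: "250 - Lv n * 2 \<noteq> 0" "250 - Lv m * 2 \<noteq> 0" using n0 by auto
    have "(125 + Lv n)*(125 - Lv m) = (125 + Lv m)*(125 - Lv n)"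
      using e n0 n1 unfolding p q g_def by (simp add: field_simps)
    then have "Lv n = Lv m" by (simp add: algebra_simps)
    then show "p = q" unfolding p q g_def by simp
  qed
  have each_n: "(125 - Lv n)/2 > 0 \<and>
      (\<exists>x y :: nat \<Rightarrow> rat.
         (\<forall>i\<in>{1..4}. on_circle ((125 + Lv n)/2) ((125 - Lv n)/2) (x i, y i)) \<and>
         (\<forall>i\<in>{1..3}. x (i + 1) = 5 / 3 * x i) \<and>
         x 4 = (125 + Lv n)/2 + (125 - Lv n)/2 \<and> y 4 = 0 \<and>
         y 1 \<noteq> 0)" for n
  proof -
    obtain u v w where uvw: "27 - Lv n = 2*u^2" "45 - Lv n = 5*w^2" "75 - Lv n = 2*v^2" using Lv_sq[of n] by blast
    define L where "L = Lv n"
    have u0: "u \<noteq> 0" using uvw(1) Lv_ne[of n] by auto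
    define x :: "nat \<Rightarrow> rat" where "x i = (if i = 1 then 27 else if i = 2 then 45 else if i = 3 then 75 else 125)" for i
    define y :: "nat \<Rightarrow> rat" where "y i = (if i = 1 then 14*u else if i = 2 then 20*w else if i = 3 then 10*v else 0)" for i
    have A: "\<forall>i\<in>{1..4}. on_circle ((125 + L)/2) ((125 - L)/2) (x i, y i)"
    proof
      fix i :: nat assume "i \<in> {1..4}"
      then have "i = 1 \<or> i = 2 \<or> i = 3 \<or> i = 4" by auto
      then show "on_circle ((125 + L)/2) ((125 - L)/2) (x i, y i)"
        using circ1[OF uvw(1)[folded L_def]] circ2[OF uvw(2)[folded L_def]] circ3[OF uvw(3)[folded L_def]] circ4[of L]
        unfolding x_def y_def by auto
    qed
    have B: "\<forall>i\<in>{1..3}. x (i + 1) = 5 / 3 * x i"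
    proof
      fix i :: nat assume "i \<in> {1..3}"
      then have "i = 1 \<or> i = 2 \<or> i = 3" by auto
      then show "x (i + 1) = 5 / 3 * x i" unfolding x_def by auto
    qed
    have C: "x 4 = (125 + L)/2 + (125 - L)/2" unfolding x_def by (simp add: field_simps)
    have D: "y 4 = 0" "y 1 \<noteq> 0" unfolding y_def using u0 by auto
    have "(125 - Lv n)/2 > 0" using Lle[of n] by simp
    then show ?thesis
      using A B C D unfolding L_def by blast
  qed
  have each: "\<forall>(h, a) \<in> range g. a > 0 \<and>
      (\<exists>x y :: nat \<Rightarrow> rat.
         (\<forall>i\<in>{1..4}. on_circle h a (x i, y i)) \<and>
         (\<forall>i\<in>{1..3}. x (i + 1) = 5 / 3 * x i) \<and>
         x 4 = h + a \<and> y 4 = 0 \<and>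
         y 1 \<noteq> 0)"
  proof
    fix p assume "p \<in> range g"
    then obtain n where p: "p = g n" by blast
    show "case p of (h, a) \<Rightarrow> a > 0 \<and>
      (\<exists>x y :: nat \<Rightarrow> rat.
         (\<forall>i\<in>{1..4}. on_circle h a (x i, y i)) \<and>
         (\<forall>i\<in>{1..3}. x (i + 1) = 5 / 3 * x i) \<and>
         x 4 = h + a \<and> y 4 = 0 \<and>
         y 1 \<noteq> 0)"
      unfolding p g_def prod.case by (rule each_n)
  qed
  show ?thesis using inf inj each by blast
qed

end
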